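(* Let $d\ge1$, $\sigma>0$, and let $A_0,A_1\in\mathbb{R}^{d\times d}$ be constant matrices with $A_0A_1\ne A_1A_0$. Let $\Psi:[-\sigma,0]\to\mathbb{R}^{d\times d}$ be continuously differentiable with $A_1\Psi(\vartheta)=\Psi(\vartheta)A_1$ for all $\vartheta\in[-\sigma,0]$. Let $Z$ be the function defined in the context. Then \[ X(\vartheta)=Z(\vartheta)\Psi(-\sigma)+\int_{-\sigma}^{0}Z(\vartheta-\sigma-s)\dot\Psi(s)\,ds,\qquad \vartheta\in[-\sigma,\infty), \] is a solution of \[ \dot X(\vartheta)=A_0X(\vartheta-\sigma)+X(\vartheta-\sigma)A_1,\ \ \vartheta\in[0,\infty),\qquad X(\vartheta)=\Psi(\vartheta),\ \ \vartheta\in[-\sigma,0]. \]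
   Context: $\Theta$ and $I$ denote the $d\times d$ zero and identity matrices. Define matrices $Q_{r+1}(r\sigma)$, $r=0,1,2,\dots$, recursively by $Q_1(0)=I$ and $Q_{r+1}(r\sigma)=A_0Q_r((r-1)\sigma)+Q_r((r-1)\sigma)A_1$ for $r\ge 1$. Define $Z:\mathbb{R}\to\mathbb{R}^{d\times d}$ by $Z(\vartheta)=\Theta$ for $\vartheta<-\sigma$, and, for each integer $u\ge 0$ and $\vartheta\in[(u-1)\sigma,u\sigma)$, \[ Z(\vartheta)=\sum_{r=0}^{u}Q_{r+1}(r\sigma)\frac{(\vartheta-(r-1)\sigma)^r}{r!}. \] *)

theory Defs
  imports "HOL-Analysis.Analysis"
begin

text \<open>Q r stands for the matrix Q_{r+1}(r sigma) of the paper.\<close>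
fun Qmat :: "real^'n^'n \<Rightarrow> real^'n^'n \<Rightarrow> nat \<Rightarrow> real^'n^'n" where
  "Qmat A0 A1 0 = mat 1"
| "Qmat A0 A1 (Suc r) = A0 ** Qmat A0 A1 r + Qmat A0 A1 r ** A1"

definition Zfun :: "real^'n^'n \<Rightarrow> real^'n^'n \<Rightarrow> real \<Rightarrow> real \<Rightarrow> real^'n^'n" where
  "Zfun A0 A1 \<sigma> \<theta> =
     (if \<theta> < - \<sigma> then 0
      else (\<Sum>r = 0..nat (\<lfloor>\<theta> / \<sigma>\<rfloor> + 1).
              ((\<theta> - (real r - 1) * \<sigma>) ^ r / fact r) *\<^sub>R Qmat A0 A1 r))"

end

theory Submission
  imports Defs
begin

lemma bl_left: "bounded_linear (\<lambda>B::real^'n^'n. A ** B)"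
proof -
  have "linear (\<lambda>B::real^'n^'n. A ** B)"
    by (rule linearI) (simp_all add: matrix_add_ldistrib matrix_scalar_ac scalar_matrix_assoc)
  then show ?thesis by (simp add: linear_conv_bounded_linear)
qed

lemma matrix_add_rdistrib': "((B + C) ** A) = (B ** A) + (C ** A)" for A B C :: "real^'n^'n"
  by (vector matrix_matrix_mult_def sum.distrib[symmetric] field_simps)

lemma bl_right: "bounded_linear (\<lambda>B::real^'n^'n. B ** A)"
proof -
  have "linear (\<lambda>B::real^'n^'n. B ** A)"
    apply (rule linearI)
    apply (vector matrix_matrix_mult_def sum.distrib[symmetric] field_simps)
    apply (simp add: scalar_matrix_assoc)
    done
  then show ?thesis by (simp add: linear_conv_bounded_linear)
qed

lemma hvd_Un:
  assumes "(f has_vector_derivative D) (at x within S)" "(f has_vector_derivative D) (at x within T)"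
  shows "(f has_vector_derivative D) (at x within S \<union> T)"
  using assms by (auto simp: has_vector_derivative_def has_derivative_within Lim_within_Un)

fun gk :: "real \<Rightarrow> nat \<Rightarrow> real \<Rightarrow> real" where
  "gk \<sigma> 0 t = (if -\<sigma> \<le> t then 1 else 0)"
| "gk \<sigma> (Suc r) t = max 0 (t - real r * \<sigma>) ^ Suc r / fact (Suc r)"

lemma Z_sum:
  assumes s: "\<sigma> > 0" and tN: "t < real N * \<sigma>"
  shows "Zfun A0 A1 \<sigma> t = (\<Sum>r=0..N. gk \<sigma> r t *\<^sub>R Qmat A0 A1 r)"
proof (cases "t < -\<sigma>")
  case True
  have "gk \<sigma> r t = 0" for r
  proof (cases r)
    case (Suc k)
    have "t - real k * \<sigma> < 0" using True s by (smt (verit) mult_nonneg_nonneg of_nat_0_le_iff)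
    then show ?thesis using Suc by simp
  qed (use True in simp)
  then show ?thesis using True by (simp add: Zfun_def)
next
  case False
  define u where "u = nat (\<lfloor>t / \<sigma>\<rfloor> + 1)"
  have ge: "t / \<sigma> \<ge> -1" using False s by (simp add: field_simps)
  hence fl: "\<lfloor>t / \<sigma>\<rfloor> \<ge> -1" by linarith
  hence ru: "real u = \<lfloor>t / \<sigma>\<rfloor> + 1" unfolding u_def by simp
  have l1: "real u - 1 \<le> t / \<sigma>" "t / \<sigma> < real u" using ru by linarith+
  have lo: "(real u - 1) * \<sigma> \<le> t" using l1(1) s by (simp add: field_simps)
  have hi: "t < real u * \<sigma>" using l1(2) s by (simp add: field_simps)
  have "t / \<sigma> < real N" using tN s by (simp add: field_simps)
  hence uN: "u \<le> N" using ru by linarith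
  have Z: "Zfun A0 A1 \<sigma> t = (\<Sum>r=0..u. ((t - (real r - 1) * \<sigma>) ^ r / fact r) *\<^sub>R Qmat A0 A1 r)"
    using False by (simp add: Zfun_def u_def)
  have eq: "(t - (real r - 1) * \<sigma>) ^ r / fact r = gk \<sigma> r t" if "r \<le> u" for r
  proof (cases r)
    case 0 then show ?thesis using False by simp
  next
    case (Suc k)
    have "real k \<le> real u - 1" using that Suc by simp
    hence "real k * \<sigma> \<le> (real u - 1) * \<sigma>" using s by (simp add: mult_right_mono)
    hence "t - real k * \<sigma> \<ge> 0" using lo by linarith
    then show ?thesis using Suc by (simp add: algebra_simps)
  qed
  have zero: "gk \<sigma> r t = 0" if "u < r" for r
  proof (cases r)
    case 0 then show ?thesis using that by simp
  next
    case (Suc k)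
    have "real u \<le> real k" using that Suc by simp
    hence "real u * \<sigma> \<le> real k * \<sigma>" using s by (simp add: mult_right_mono)
    hence "t - real k * \<sigma> < 0" using hi by linarith
    then show ?thesis using Suc by simp
  qed
  have "(\<Sum>r=0..N. gk \<sigma> r t *\<^sub>R Qmat A0 A1 r) = (\<Sum>r=0..u. gk \<sigma> r t *\<^sub>R Qmat A0 A1 r)"
    by (rule sum.mono_neutral_right) (use uN zero in auto)
  also have "\<dots> = Zfun A0 A1 \<sigma> t" unfolding Z by (rule sum.cong) (use eq in auto)
  finally show ?thesis by simp
qed
lemma trunc_deriv:
  fixes a y :: real
  shows "((\<lambda>y. max 0 (y - a) ^ Suc (Suc n)) has_real_derivative (Suc (Suc n)) * max 0 (y - a) ^ Suc n) (at y)"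
proof -
  consider "y < a" | "y > a" | "y = a" by linarith
  then show ?thesis
  proof cases
    case 1
    have "((\<lambda>y. 0::real) has_real_derivative 0) (at y)" by simp
    then show ?thesis
      apply (rule has_field_derivative_transform_within_open[where S="{..<a}", THEN DERIV_cong])
      using 1 by auto
  next
    case 2
    have "((\<lambda>y. (y - a) ^ Suc (Suc n)) has_real_derivative (Suc (Suc n)) * (y - a) ^ Suc n) (at y)"
    proof -
      have "((\<lambda>y. y - a) has_real_derivative 1) (at y)" by (auto intro!: derivative_eq_intros)
      from DERIV_power_Suc[OF this, of "Suc n"] show ?thesis by simp
    qed
    then show ?thesis
      apply (rule has_field_derivative_transform_within_open[where S="{a<..}", THEN DERIV_cong])
      using 2 by auto
  next
    case 3
    have lim: "((\<lambda>z. \<bar>z - a\<bar> ^ Suc n) \<longlongrightarrow> 0) (at a)"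
      by (auto intro!: tendsto_eq_intros)
    have bnd: "norm (max 0 (z - a) ^ Suc (Suc n) / (z - a)) \<le> \<bar>z - a\<bar> ^ Suc n" for z
    proof (cases "z = a")
      case False
      have "\<bar>max 0 (z - a)\<bar> ^ Suc (Suc n) \<le> \<bar>z - a\<bar> ^ Suc (Suc n)"
        by (rule power_mono) auto
      hence "\<bar>max 0 (z - a) ^ Suc (Suc n)\<bar> \<le> \<bar>z - a\<bar> ^ Suc (Suc n)"
        by (metis power_abs)
      hence "\<bar>max 0 (z - a) ^ Suc (Suc n)\<bar> / \<bar>z - a\<bar> \<le> \<bar>z - a\<bar> ^ Suc (Suc n) / \<bar>z - a\<bar>"
        by (rule divide_right_mono) simp
      also have "\<dots> = \<bar>z - a\<bar> ^ Suc n" using False by simp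
      finally show ?thesis by (simp add: abs_divide)
    qed simp
    have "((\<lambda>z. (max 0 (z - a) ^ Suc (Suc n) - max 0 (a - a) ^ Suc (Suc n)) / (z - a)) \<longlongrightarrow> 0) (at a)"
      by (rule Lim_null_comparison[OF _ lim]) (use bnd in auto)
    then show ?thesis using 3 by (simp add: has_field_derivative_iff)
  qed
qed

lemma gk_deriv:
  assumes s: "\<sigma> > 0"
  shows "(gk \<sigma> (Suc (Suc n)) has_real_derivative gk \<sigma> (Suc n) (y - \<sigma>)) (at y)"
proof -
  define c where "c = real (Suc n) * \<sigma>"
  have d: "((\<lambda>y. max 0 (y - c) ^ Suc (Suc n)) has_real_derivative (Suc (Suc n)) * max 0 (y - c) ^ Suc n) (at y)"
    by (rule trunc_deriv)
  have "((\<lambda>y. max 0 (y - c) ^ Suc (Suc n) / fact (Suc (Suc n))) has_real_derivative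
      (Suc (Suc n)) * max 0 (y - c) ^ Suc n / fact (Suc (Suc n))) (at y)"
    by (rule DERIV_cdivide[OF d])
  moreover have "(Suc (Suc n)) * max 0 (y - c) ^ Suc n / fact (Suc (Suc n))
      = gk \<sigma> (Suc n) (y - \<sigma>)"
  proof -
    have f: "(fact (Suc (Suc n))::real) = real (Suc (Suc n)) * fact (Suc n)" by (rule fact_Suc)
    have e2: "y - \<sigma> - real n * \<sigma> = y - c" by (simp add: c_def algebra_simps)
    have "real (Suc (Suc n)) \<noteq> 0" by simp
    then show ?thesis unfolding gk.simps f e2 by (simp del: fact_Suc of_nat_Suc)
  qed
  moreover have e1: "gk \<sigma> (Suc (Suc n)) = (\<lambda>y. max 0 (y - c) ^ Suc (Suc n) / fact (Suc (Suc n)))"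
    by (rule ext) (simp only: gk.simps c_def)
  ultimately show ?thesis by (metis DERIV_cong)
qed

lemma hvd_trivial': "\<not> x islimpt S \<Longrightarrow> (f has_vector_derivative D) (at x within S)"
proof -
  assume "\<not> x islimpt S"
  hence bot: "at x within S = bot" using trivial_limit_within trivial_limit_def by blast
  show ?thesis unfolding has_vector_derivative_def has_derivative_def bot
    by (simp add: bounded_linear_scaleR_left)
qed
lemma gk_cont: "continuous_on UNIV (gk \<sigma> (Suc k))"
  by (simp add: continuous_intros)

lemma sum_mult_right: "(\<Sum>r\<in>S. f r) ** B = (\<Sum>r\<in>S. f r ** B)" for B :: "real^'n^'n" and f :: "'a \<Rightarrow> real^'n^'n"
  by (induction S rule: infinite_finite_induct) (simp_all add: matrix_add_rdistrib')

lemma sum_mult_left: "B ** (\<Sum>r\<in>S. f r) = (\<Sum>r\<in>S. B ** f r)" for B :: "real^'n^'n" and f :: "'a \<Rightarrow> real^'n^'n"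
  by (induction S rule: infinite_finite_induct) (simp_all add: matrix_add_ldistrib)

context
  fixes A0 A1 :: "real^'n^'n" and \<sigma> :: real and \<Psi> \<Psi>' :: "real \<Rightarrow> real^'n^'n"
  assumes s: "\<sigma> > 0"
    and D: "\<And>s. s \<in> {-\<sigma>..0} \<Longrightarrow> (\<Psi> has_vector_derivative \<Psi>' s) (at s within {-\<sigma>..0})"
    and C: "continuous_on {-\<sigma>..0} \<Psi>'"
begin

definition K :: "nat \<Rightarrow> real \<Rightarrow> real^'n^'n" where
  "K r \<theta> = gk \<sigma> r \<theta> *\<^sub>R \<Psi> (-\<sigma>) + integral {-\<sigma>..0} (\<lambda>s. gk \<sigma> r (\<theta> - \<sigma> - s) *\<^sub>R \<Psi>' s)"

lemma int0:
  "((\<lambda>s. gk \<sigma> 0 (\<theta> - \<sigma> - s) *\<^sub>R \<Psi>' s) has_integral integral {-\<sigma>..min \<theta> 0} \<Psi>') {-\<sigma>..0}"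
proof -
  have sub: "{-\<sigma>..min \<theta> 0} \<subseteq> {-\<sigma>..0}" by auto
  have "\<Psi>' integrable_on {-\<sigma>..min \<theta> 0}"
    by (rule integrable_continuous_interval) (rule continuous_on_subset[OF C sub])
  hence "((\<lambda>s. if s \<in> {-\<sigma>..min \<theta> 0} then \<Psi>' s else 0) has_integral integral {-\<sigma>..min \<theta> 0} \<Psi>') {-\<sigma>..0}"
    using has_integral_restrict[OF sub] integrable_integral by blast
  then show ?thesis
    by (rule has_integral_eq[rotated]) auto
qed

lemma integrable_gk: "(\<lambda>s. gk \<sigma> r (\<theta> - \<sigma> - s) *\<^sub>R \<Psi>' s) integrable_on {-\<sigma>..0}"
proof (cases r)
  case 0 then show ?thesis using int0 by blast
next
  case (Suc k)
  have "continuous_on {-\<sigma>..0} (\<lambda>s. gk \<sigma> r (\<theta> - \<sigma> - s) *\<^sub>R \<Psi>' s)"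
    unfolding Suc gk.simps by (intro continuous_intros C) (simp_all add: fact_nonzero)
  then show ?thesis by (rule integrable_continuous_interval)
qed

lemma K0: assumes "\<theta> \<ge> -\<sigma>" shows "K 0 \<theta> = \<Psi> (min \<theta> 0)"
proof -
  have "(\<Psi>' has_integral (\<Psi> (min \<theta> 0) - \<Psi> (-\<sigma>))) {-\<sigma>..min \<theta> 0}"
    apply (rule fundamental_theorem_of_calculus)
    using assms s apply simp
    apply (rule has_vector_derivative_within_subset[OF D]) by auto
  hence "integral {-\<sigma>..min \<theta> 0} \<Psi>' = \<Psi> (min \<theta> 0) - \<Psi> (-\<sigma>)" by (rule integral_unique)
  then show ?thesis using int0[of \<theta>] assms unfolding K_def by (simp add: integral_unique)
qed

lemma Kpos_zero: assumes "\<theta> \<le> 0" shows "K (Suc k) \<theta> = 0"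
proof -
  have "gk \<sigma> (Suc k) t = 0" if "t \<le> 0" for t
  proof -
    have "real k * \<sigma> \<ge> 0" using s by simp
    hence "max 0 (t - real k * \<sigma>) = 0" using that by simp
    then show ?thesis by simp
  qed
  hence a: "gk \<sigma> (Suc k) \<theta> = 0" using assms by blast
  have "gk \<sigma> (Suc k) (\<theta> - \<sigma> - x) = 0" if "x \<in> {-\<sigma>..0}" for x
    using that assms \<open>\<And>t. t \<le> 0 \<Longrightarrow> gk \<sigma> (Suc k) t = 0\<close>[of "\<theta> - \<sigma> - x"] by simp
  hence "integral {-\<sigma>..0} (\<lambda>s. gk \<sigma> (Suc k) (\<theta> - \<sigma> - s) *\<^sub>R \<Psi>' s) = integral {-\<sigma>..0} (\<lambda>_. 0)"
    by (intro integral_cong) simp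
  hence "integral {-\<sigma>..0} (\<lambda>s. gk \<sigma> (Suc k) (\<theta> - \<sigma> - s) *\<^sub>R \<Psi>' s) = 0" by simp
  then show ?thesis unfolding K_def a by simp
qed


lemma scal_swap: "(c *\<^sub>R Q) ** P = Q ** (c *\<^sub>R P)" for Q P :: "real^'n^'n"
  by (simp add: matrix_scalar_ac scalar_matrix_assoc)

lemma X_sum:
  assumes X: "\<And>\<theta>. \<theta> \<ge> -\<sigma> \<Longrightarrow> X \<theta> = Zfun A0 A1 \<sigma> \<theta> ** \<Psi> (-\<sigma>)
           + integral {-\<sigma>..0} (\<lambda>s. Zfun A0 A1 \<sigma> (\<theta> - \<sigma> - s) ** \<Psi>' s)"
    and th: "\<theta> \<ge> -\<sigma>" "\<theta> < real N * \<sigma>"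
  shows "X \<theta> = (\<Sum>r=0..N. Qmat A0 A1 r ** K r \<theta>)"
proof -
  have Zt: "Zfun A0 A1 \<sigma> \<theta> ** \<Psi> (-\<sigma>) = (\<Sum>r=0..N. Qmat A0 A1 r ** (gk \<sigma> r \<theta> *\<^sub>R \<Psi> (-\<sigma>)))"
    by (simp only: Z_sum[OF s th(2)] sum_mult_right scal_swap)
  have "integral {-\<sigma>..0} (\<lambda>s. Zfun A0 A1 \<sigma> (\<theta> - \<sigma> - s) ** \<Psi>' s)
      = integral {-\<sigma>..0} (\<lambda>s. \<Sum>r=0..N. Qmat A0 A1 r ** (gk \<sigma> r (\<theta> - \<sigma> - s) *\<^sub>R \<Psi>' s))"
  proof (rule integral_cong)
    fix x assume "x \<in> {-\<sigma>..0}"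
    hence "\<theta> - \<sigma> - x < real N * \<sigma>" using th by auto
    then show "Zfun A0 A1 \<sigma> (\<theta> - \<sigma> - x) ** \<Psi>' x = (\<Sum>r=0..N. Qmat A0 A1 r ** (gk \<sigma> r (\<theta> - \<sigma> - x) *\<^sub>R \<Psi>' x))"
      by (simp only: Z_sum[OF s] sum_mult_right scal_swap)
  qed
  also have "\<dots> = (\<Sum>r=0..N. integral {-\<sigma>..0} (\<lambda>s. Qmat A0 A1 r ** (gk \<sigma> r (\<theta> - \<sigma> - s) *\<^sub>R \<Psi>' s)))"
    apply (rule integral_sum, simp)
    using integrable_linear[OF integrable_gk bl_left] by (simp add: o_def)
  also have "\<dots> = (\<Sum>r=0..N. Qmat A0 A1 r ** integral {-\<sigma>..0} (\<lambda>s. gk \<sigma> r (\<theta> - \<sigma> - s) *\<^sub>R \<Psi>' s))"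
    by (intro sum.cong refl) (rule integral_linear[OF integrable_gk bl_left, unfolded o_def])
  finally show ?thesis
    unfolding X[OF th(1)] Zt K_def by (simp add: matrix_add_ldistrib sum.distrib)
qed


lemma Fval: "m \<in> {-\<sigma>..0} \<Longrightarrow> integral {-\<sigma>..m} \<Psi>' = \<Psi> m - \<Psi> (-\<sigma>)"
proof -
  assume m: "m \<in> {-\<sigma>..0}"
  have "(\<Psi>' has_integral (\<Psi> m - \<Psi> (-\<sigma>))) {-\<sigma>..m}"
    apply (rule fundamental_theorem_of_calculus)
    using m apply simp
    apply (rule has_vector_derivative_within_subset[OF D]) using m by auto
  then show ?thesis by (rule integral_unique)
qed

lemma Kss_deriv:
  assumes th: "\<theta> \<ge> 0"
  shows "(K (Suc (Suc n)) has_vector_derivative K (Suc n) (\<theta> - \<sigma>)) (at \<theta> within {0..})"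
proof -
  have d1: "((\<lambda>\<theta>. gk \<sigma> (Suc (Suc n)) \<theta> *\<^sub>R \<Psi> (-\<sigma>)) has_vector_derivative
      gk \<sigma> (Suc n) (\<theta> - \<sigma>) *\<^sub>R \<Psi> (-\<sigma>)) (at \<theta> within {0..})"
    using has_vector_derivative_scaleR[OF has_field_derivative_at_within[OF gk_deriv[OF s]] has_vector_derivative_const]
    by simp
  have c1: "continuous_on UNIV (\<lambda>p::real\<times>real. gk \<sigma> (Suc n) (fst p - \<sigma> - \<sigma> - snd p))"
    by (simp add: continuous_intros)
  have c2: "continuous_on ({0..} \<times> {-\<sigma>..0}) (\<lambda>p::real\<times>real. \<Psi>' (snd p))"
    by (rule continuous_on_compose2[OF C continuous_on_snd]) auto
  have d2: "((\<lambda>x. integral (cbox (-\<sigma>) 0) (\<lambda>t. gk \<sigma> (Suc (Suc n)) (x - \<sigma> - t) *\<^sub>R \<Psi>' t))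
      has_vector_derivative integral (cbox (-\<sigma>) 0) (\<lambda>t. gk \<sigma> (Suc n) (\<theta> - \<sigma> - \<sigma> - t) *\<^sub>R \<Psi>' t))
      (at \<theta> within {0..})"
  proof (rule leibniz_rule_vector_derivative)
    fix x t :: real
    have g: "((\<lambda>x. x - \<sigma> - t) has_real_derivative 1) (at x within {0..})"
      by (auto intro!: derivative_eq_intros)
    have "((\<lambda>x. gk \<sigma> (Suc (Suc n)) (x - \<sigma> - t)) has_real_derivative gk \<sigma> (Suc n) (x - \<sigma> - t - \<sigma>) * 1)
        (at x within {0..})"
      by (rule DERIV_chain2[OF gk_deriv[OF s] g])
    hence "((\<lambda>x. gk \<sigma> (Suc (Suc n)) (x - \<sigma> - t)) has_real_derivative gk \<sigma> (Suc n) (x - \<sigma> - \<sigma> - t))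
        (at x within {0..})"
      by (simp add: algebra_simps)
    from has_vector_derivative_scaleR[OF this has_vector_derivative_const[of "\<Psi>' t"]]
    show "((\<lambda>x. gk \<sigma> (Suc (Suc n)) (x - \<sigma> - t) *\<^sub>R \<Psi>' t) has_vector_derivative
        gk \<sigma> (Suc n) (x - \<sigma> - \<sigma> - t) *\<^sub>R \<Psi>' t) (at x within {0..})"
      by simp
  next
    fix x :: real
    show "(\<lambda>t. gk \<sigma> (Suc (Suc n)) (x - \<sigma> - t) *\<^sub>R \<Psi>' t) integrable_on cbox (- \<sigma>) 0"
      unfolding box_real by (rule integrable_gk)
  next
    have "continuous_on ({0..} \<times> {-\<sigma>..0}) (\<lambda>p::real\<times>real. gk \<sigma> (Suc n) (fst p - \<sigma> - \<sigma> - snd p) *\<^sub>R \<Psi>' (snd p))"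
      by (rule continuous_on_scaleR[OF continuous_on_subset[OF c1] c2]) auto
    then show "continuous_on ({0..} \<times> cbox (- \<sigma>) 0) (\<lambda>(x, t). gk \<sigma> (Suc n) (x - \<sigma> - \<sigma> - t) *\<^sub>R \<Psi>' t)"
      by (simp add: case_prod_beta')
  qed (use th in auto)
  have "K (Suc (Suc n)) = (\<lambda>\<theta>. gk \<sigma> (Suc (Suc n)) \<theta> *\<^sub>R \<Psi> (-\<sigma>) +
      integral (cbox (-\<sigma>) 0) (\<lambda>t. gk \<sigma> (Suc (Suc n)) (\<theta> - \<sigma> - t) *\<^sub>R \<Psi>' t))"
    by (simp add: fun_eq_iff K_def)
  moreover have "K (Suc n) (\<theta> - \<sigma>) = gk \<sigma> (Suc n) (\<theta> - \<sigma>) *\<^sub>R \<Psi> (-\<sigma>) +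
      integral (cbox (-\<sigma>) 0) (\<lambda>t. gk \<sigma> (Suc n) (\<theta> - \<sigma> - \<sigma> - t) *\<^sub>R \<Psi>' t)"
    by (simp add: K_def)
  ultimately show ?thesis using has_vector_derivative_add[OF d1 d2] by simp
qed


definition kk :: "real \<Rightarrow> real^'n^'n" where
  "kk c = integral {-\<sigma>..0} (\<lambda>s. gk \<sigma> (Suc 0) (c - s) *\<^sub>R \<Psi>' s)"

definition FF :: "real \<Rightarrow> real^'n^'n" where "FF m = integral {-\<sigma>..m} \<Psi>'"
definition GG :: "real \<Rightarrow> real^'n^'n" where "GG m = integral {-\<sigma>..m} (\<lambda>s. s *\<^sub>R \<Psi>' s)"

lemma kk_repr:
  assumes c: "c \<ge> -\<sigma>"
  shows "kk c = c *\<^sub>R FF (min c 0) - GG (min c 0)"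
proof -
  define m where "m = min c 0"
  have sub: "{-\<sigma>..m} \<subseteq> {-\<sigma>..0}" by (auto simp: m_def)
  have C1: "continuous_on {-\<sigma>..m} \<Psi>'" by (rule continuous_on_subset[OF C sub])
  have C2: "continuous_on {-\<sigma>..m} (\<lambda>s. s *\<^sub>R \<Psi>' s)" by (intro continuous_intros C1)
  have i1: "(\<Psi>' has_integral FF m) {-\<sigma>..m}"
    unfolding FF_def by (rule integrable_integral[OF integrable_continuous_interval[OF C1]])
  have i2: "((\<lambda>s. s *\<^sub>R \<Psi>' s) has_integral GG m) {-\<sigma>..m}"
    unfolding GG_def by (rule integrable_integral[OF integrable_continuous_interval[OF C2]])
  have "((\<lambda>s. c *\<^sub>R \<Psi>' s - s *\<^sub>R \<Psi>' s) has_integral (c *\<^sub>R FF m - GG m)) {-\<sigma>..m}"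
    by (rule has_integral_diff[OF has_integral_cmul[OF i1] i2])
  hence "((\<lambda>s. if s \<in> {-\<sigma>..m} then c *\<^sub>R \<Psi>' s - s *\<^sub>R \<Psi>' s else 0) has_integral (c *\<^sub>R FF m - GG m)) {-\<sigma>..0}"
    by (subst has_integral_restrict[OF sub])
  hence "((\<lambda>s. gk \<sigma> (Suc 0) (c - s) *\<^sub>R \<Psi>' s) has_integral (c *\<^sub>R FF m - GG m)) {-\<sigma>..0}"
  proof (rule has_integral_eq[rotated])
    fix s assume s: "s \<in> {-\<sigma>..0}"
    show "(if s \<in> {-\<sigma>..m} then c *\<^sub>R \<Psi>' s - s *\<^sub>R \<Psi>' s else 0) = gk \<sigma> (Suc 0) (c - s) *\<^sub>R \<Psi>' s"
    proof (cases "s \<le> c")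
      case True
      then show ?thesis using s by (simp add: m_def scaleR_left_diff_distrib)
    next
      case False
      then show ?thesis using s by (simp add: m_def)
    qed
  qed
  then show ?thesis unfolding kk_def m_def by (rule integral_unique)
qed

lemma kk_deriv:
  assumes c: "c \<ge> -\<sigma>"
  shows "(kk has_vector_derivative FF (min c 0)) (at c within {-\<sigma>..})"
proof -
  have U: "{-\<sigma>..} = {-\<sigma>..0} \<union> {0::real..}" using s by auto
  have A: "(kk has_vector_derivative FF (min c 0)) (at c within {-\<sigma>..0})"
  proof (cases "c \<le> 0")
    case True
    have cc: "c \<in> {-\<sigma>..0}" using True c by auto
    have C2: "continuous_on {-\<sigma>..0} (\<lambda>s. s *\<^sub>R \<Psi>' s)" by (intro continuous_intros C)
    have dF: "(FF has_vector_derivative \<Psi>' c) (at c within {-\<sigma>..0})"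
      unfolding FF_def by (rule integral_has_vector_derivative[OF C cc])
    have dG: "(GG has_vector_derivative c *\<^sub>R \<Psi>' c) (at c within {-\<sigma>..0})"
      unfolding GG_def using integral_has_vector_derivative[OF C2 cc] by simp
    have "((\<lambda>x. x *\<^sub>R FF x - GG x) has_vector_derivative (c *\<^sub>R \<Psi>' c + 1 *\<^sub>R FF c) - c *\<^sub>R \<Psi>' c)
        (at c within {-\<sigma>..0})"
      by (rule has_vector_derivative_diff[OF has_vector_derivative_scaleR[OF _ dF] dG])
         (auto intro!: derivative_eq_intros)
    hence "((\<lambda>x. x *\<^sub>R FF x - GG x) has_vector_derivative FF (min c 0)) (at c within {-\<sigma>..0})"
      using True by simp
    then show ?thesis
      by (rule has_vector_derivative_transform[OF cc, rotated]) (use kk_repr in auto)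
  next
    case False
    have "\<not> c islimpt {-\<sigma>..0}" using False closed_limpt[of "{-\<sigma>..0::real}"] by auto
    then show ?thesis by (rule hvd_trivial')
  qed
  have B: "(kk has_vector_derivative FF (min c 0)) (at c within {0..})"
  proof (cases "c \<ge> 0")
    case True
    have cc: "c \<in> {0..}" using True by auto
    have "((\<lambda>x. x *\<^sub>R FF 0 - GG 0) has_vector_derivative 1 *\<^sub>R FF 0) (at c within {0..})"
      by (auto intro!: derivative_eq_intros)
    hence "((\<lambda>x. x *\<^sub>R FF 0 - GG 0) has_vector_derivative FF (min c 0)) (at c within {0..})"
      using True by simp
    then show ?thesis
      by (rule has_vector_derivative_transform[OF cc, rotated]) (use kk_repr s in auto)
  next
    case False
    have "\<not> c islimpt {0..}" using False closed_limpt[of "{0::real..}"] by auto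
    then show ?thesis by (rule hvd_trivial')
  qed
  show ?thesis unfolding U by (rule hvd_Un[OF A B])
qed

lemma K1_deriv:
  assumes th: "\<theta> \<ge> 0"
  shows "(K (Suc 0) has_vector_derivative K 0 (\<theta> - \<sigma>)) (at \<theta> within {0..})"
proof -
  have A: "((\<lambda>x. gk \<sigma> (Suc 0) x *\<^sub>R \<Psi> (-\<sigma>)) has_vector_derivative \<Psi> (-\<sigma>)) (at \<theta> within {0..})"
  proof (rule has_vector_derivative_transform[of \<theta>])
    show "((\<lambda>x. x *\<^sub>R \<Psi> (-\<sigma>)) has_vector_derivative \<Psi> (-\<sigma>)) (at \<theta> within {0..})"
      using has_vector_derivative_scaleR[OF DERIV_ident has_vector_derivative_const[of "\<Psi> (-\<sigma>)"]] by simp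
  qed (use th in auto)
  have img: "(\<lambda>x. x - \<sigma>) ` {0..} = {-\<sigma>..}"
  proof
    show "{-\<sigma>..} \<subseteq> (\<lambda>x. x - \<sigma>) ` {0..}"
    proof
      fix y assume "y \<in> {-\<sigma>..}"
      then show "y \<in> (\<lambda>x. x - \<sigma>) ` {0..}" by (intro image_eqI[of _ _ "y + \<sigma>"]) auto
    qed
  qed auto
  have "((kk \<circ> (\<lambda>x. x - \<sigma>)) has_vector_derivative 1 *\<^sub>R FF (min (\<theta> - \<sigma>) 0)) (at \<theta> within {0..})"
    apply (rule vector_diff_chain_within)
     apply (auto intro!: derivative_eq_intros)[1]
    unfolding img using kk_deriv th by simp
  hence B: "((\<lambda>x. kk (x - \<sigma>)) has_vector_derivative FF (min (\<theta> - \<sigma>) 0)) (at \<theta> within {0..})"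
    by (simp add: o_def)
  have "K (Suc 0) = (\<lambda>x. gk \<sigma> (Suc 0) x *\<^sub>R \<Psi> (-\<sigma>) + kk (x - \<sigma>))"
    by (simp add: fun_eq_iff K_def kk_def)
  moreover have "\<Psi> (-\<sigma>) + FF (min (\<theta> - \<sigma>) 0) = K 0 (\<theta> - \<sigma>)"
    using K0[of "\<theta> - \<sigma>"] Fval[of "min (\<theta> - \<sigma>) 0"] th s unfolding FF_def by simp
  ultimately show ?thesis using has_vector_derivative_add[OF A B] by simp
qed

lemma K0_deriv:
  assumes th: "\<theta> \<ge> 0"
  shows "(K 0 has_vector_derivative 0) (at \<theta> within {0..})"
  by (rule has_vector_derivative_transform[of \<theta> _ _ "\<lambda>_. \<Psi> 0"]) (use th K0 s in auto)


lemma Psi'_comm: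
  assumes comm: "\<And>\<theta>. \<theta> \<in> {-\<sigma>..0} \<Longrightarrow> A1 ** \<Psi> \<theta> = \<Psi> \<theta> ** A1"
    and x: "x \<in> {-\<sigma>..0}"
  shows "A1 ** \<Psi>' x = \<Psi>' x ** A1"
proof -
  have x': "x \<in> cbox (-\<sigma>) 0" using x by simp
  have d1: "((\<lambda>y. A1 ** \<Psi> y - \<Psi> y ** A1) has_vector_derivative A1 ** \<Psi>' x - \<Psi>' x ** A1)
      (at x within cbox (-\<sigma>) 0)"
    unfolding box_real
    by (intro has_vector_derivative_diff bounded_linear.has_vector_derivative[OF bl_left] 
          bounded_linear.has_vector_derivative[OF bl_right] D x)
  have d2: "((\<lambda>y. A1 ** \<Psi> y - \<Psi> y ** A1) has_vector_derivative 0) (at x within cbox (-\<sigma>) 0)"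
    by (rule has_vector_derivative_transform[OF x' _ has_vector_derivative_const]) (use comm in auto)
  have "A1 ** \<Psi>' x - \<Psi>' x ** A1 = 0"
    by (rule vector_derivative_unique_within_closed_interval[OF _ x' d1 d2]) (use s in simp)
  then show ?thesis by simp
qed

lemma K_comm:
  assumes comm: "\<And>\<theta>. \<theta> \<in> {-\<sigma>..0} \<Longrightarrow> A1 ** \<Psi> \<theta> = \<Psi> \<theta> ** A1"
  shows "A1 ** K r \<theta> = K r \<theta> ** A1"
proof -
  have "A1 ** integral {-\<sigma>..0} (\<lambda>s. gk \<sigma> r (\<theta> - \<sigma> - s) *\<^sub>R \<Psi>' s)
      = integral {-\<sigma>..0} (\<lambda>s. A1 ** (gk \<sigma> r (\<theta> - \<sigma> - s) *\<^sub>R \<Psi>' s))"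
    by (rule integral_linear[OF integrable_gk bl_left, unfolded o_def, symmetric])
  also have "\<dots> = integral {-\<sigma>..0} (\<lambda>s. (gk \<sigma> r (\<theta> - \<sigma> - s) *\<^sub>R \<Psi>' s) ** A1)"
    by (rule integral_cong) (use Psi'_comm[OF comm] in \<open>auto simp: matrix_scalar_ac scalar_matrix_assoc[symmetric]\<close>)
  also have "\<dots> = integral {-\<sigma>..0} (\<lambda>s. gk \<sigma> r (\<theta> - \<sigma> - s) *\<^sub>R \<Psi>' s) ** A1"
    by (rule integral_linear[OF integrable_gk bl_right, unfolded o_def])
  moreover have "A1 ** \<Psi> (-\<sigma>) = \<Psi> (-\<sigma>) ** A1" using comm[of "-\<sigma>"] s by simp
  ultimately show ?thesis
    unfolding K_def
    by (simp add: matrix_add_ldistrib matrix_add_rdistrib' matrix_scalar_ac scalar_matrix_assoc[symmetric])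
qed

definition Kd :: "real \<Rightarrow> nat \<Rightarrow> real^'n^'n" where
  "Kd \<theta> r = (case r of 0 \<Rightarrow> 0 | Suc j \<Rightarrow> K j (\<theta> - \<sigma>))"

lemma K_deriv:
  assumes th: "\<theta> \<ge> 0"
  shows "(K r has_vector_derivative Kd \<theta> r) (at \<theta> within {0..})"
proof (cases r)
  case 0 then show ?thesis using K0_deriv[OF th] by (simp add: Kd_def)
next
  case (Suc j)
  then show ?thesis
  proof (cases j)
    case 0 then show ?thesis using K1_deriv[OF th] Suc by (simp add: Kd_def)
  next
    case (Suc n) then show ?thesis using Kss_deriv[OF th] \<open>r = Suc j\<close> by (simp add: Kd_def)
  qed
qed

lemma main:
  assumes comm: "\<And>\<theta>. \<theta> \<in> {-\<sigma>..0} \<Longrightarrow> A1 ** \<Psi> \<theta> = \<Psi> \<theta> ** A1"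
    and X: "\<And>\<theta>. \<theta> \<ge> -\<sigma> \<Longrightarrow> X \<theta> = Zfun A0 A1 \<sigma> \<theta> ** \<Psi> (-\<sigma>)
           + integral {-\<sigma>..0} (\<lambda>s. Zfun A0 A1 \<sigma> (\<theta> - \<sigma> - s) ** \<Psi>' s)"
  shows "(\<forall>\<theta>\<ge>0. (X has_vector_derivative (A0 ** X (\<theta> - \<sigma>) + X (\<theta> - \<sigma>) ** A1))
            (at \<theta> within {0..}))
       \<and> (\<forall>\<theta>\<in>{-\<sigma>..0}. X \<theta> = \<Psi> \<theta>)"
proof safe
  fix \<theta> :: real assume th: "\<theta> \<in> {-\<sigma>..0}"
  have "\<theta> < real 1 * \<sigma>" using th s by simp
  from X_sum[OF X _ this] th have "X \<theta> = (\<Sum>r=0..1. Qmat A0 A1 r ** K r \<theta>)" by simp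
  also have "\<dots> = K 0 \<theta> + Qmat A0 A1 1 ** K (Suc 0) \<theta>" by simp
  also have "\<dots> = \<Psi> \<theta>" using K0[of \<theta>] Kpos_zero[of \<theta> 0] th by simp
  finally show "X \<theta> = \<Psi> \<theta>" .
next
  fix \<theta> :: real assume th: "0 \<le> \<theta>"
  define M where "M = nat \<lceil>\<theta> / \<sigma>\<rceil>"
  have "\<theta> / \<sigma> \<le> real M" unfolding M_def by linarith
  hence thM: "\<theta> \<le> real M * \<sigma>" using s by (simp add: field_simps)
  have thN: "\<theta> < real (Suc M) * \<sigma>" using thM s by (simp add: algebra_simps)
  define Y where "Y x = (\<Sum>r=0..Suc M. Qmat A0 A1 r ** K r x)" for x
  have dY: "(Y has_vector_derivative (\<Sum>r=0..Suc M. Qmat A0 A1 r ** Kd \<theta> r)) (at \<theta> within {0..})"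
    unfolding Y_def
    by (intro has_vector_derivative_sum bounded_linear.has_vector_derivative[OF bl_left] K_deriv th)
  have dX: "(X has_vector_derivative (\<Sum>r=0..Suc M. Qmat A0 A1 r ** Kd \<theta> r)) (at \<theta> within {0..})"
  proof (rule has_vector_derivative_transform_within[OF dY, of "real (Suc M) * \<sigma> - \<theta>"])
    fix x' assume x': "x' \<in> {0..}" "dist x' \<theta> < real (Suc M) * \<sigma> - \<theta>"
    hence "x' < real (Suc M) * \<sigma>" by (simp add: dist_real_def)
    then show "Y x' = X x'" unfolding Y_def using X_sum[OF X, of x' "Suc M"] x' s by simp
  qed (use thN th in auto)
  have XM: "X (\<theta> - \<sigma>) = (\<Sum>r=0..M. Qmat A0 A1 r ** K r (\<theta> - \<sigma>))"
    by (rule X_sum[OF X]) (use th thM s in \<open>auto simp: algebra_simps\<close>)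
  have "(\<Sum>r=0..Suc M. Qmat A0 A1 r ** Kd \<theta> r) = (\<Sum>r=0..M. Qmat A0 A1 (Suc r) ** K r (\<theta> - \<sigma>))"
    by (subst sum.atLeast0_atMost_Suc_shift) (simp add: Kd_def)
  also have "\<dots> = (\<Sum>r=0..M. A0 ** (Qmat A0 A1 r ** K r (\<theta> - \<sigma>)) + (Qmat A0 A1 r ** K r (\<theta> - \<sigma>)) ** A1)"
  proof (rule sum.cong[OF refl])
    fix r
    have "Qmat A0 A1 (Suc r) ** K r (\<theta> - \<sigma>) = (A0 ** Qmat A0 A1 r) ** K r (\<theta> - \<sigma>) + Qmat A0 A1 r ** (A1 ** K r (\<theta> - \<sigma>))"
      by (simp add: matrix_add_rdistrib' matrix_mul_assoc)
    also have "\<dots> = A0 ** (Qmat A0 A1 r ** K r (\<theta> - \<sigma>)) + (Qmat A0 A1 r ** K r (\<theta> - \<sigma>)) ** A1"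
      by (metis K_comm[OF comm] matrix_mul_assoc)
    finally show "Qmat A0 A1 (Suc r) ** K r (\<theta> - \<sigma>) = A0 ** (Qmat A0 A1 r ** K r (\<theta> - \<sigma>)) + (Qmat A0 A1 r ** K r (\<theta> - \<sigma>)) ** A1" .
  qed
  also have "\<dots> = A0 ** X (\<theta> - \<sigma>) + X (\<theta> - \<sigma>) ** A1"
    unfolding XM by (simp add: sum.distrib sum_mult_left sum_mult_right)
  finally show "(X has_vector_derivative A0 ** X (\<theta> - \<sigma>) + X (\<theta> - \<sigma>) ** A1) (at \<theta> within {0..})"
    using dX by simp
qed

end

theorem theorem4:
  fixes A0 A1 :: "real^'n^'n" and \<sigma> :: real
    and \<Psi> \<Psi>' X :: "real \<Rightarrow> real^'n^'n"
  assumes "\<sigma> > 0"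
    and "A0 ** A1 \<noteq> A1 ** A0"
    and "\<And>s. s \<in> {-\<sigma>..0} \<Longrightarrow> (\<Psi> has_vector_derivative \<Psi>' s) (at s within {-\<sigma>..0})"
    and "continuous_on {-\<sigma>..0} \<Psi>'"
    and "\<And>\<theta>. \<theta> \<in> {-\<sigma>..0} \<Longrightarrow> A1 ** \<Psi> \<theta> = \<Psi> \<theta> ** A1"
    and "\<And>\<theta>. \<theta> \<ge> -\<sigma> \<Longrightarrow> X \<theta> = Zfun A0 A1 \<sigma> \<theta> ** \<Psi> (-\<sigma>)
           + integral {-\<sigma>..0} (\<lambda>s. Zfun A0 A1 \<sigma> (\<theta> - \<sigma> - s) ** \<Psi>' s)"
  shows "(\<forall>\<theta>\<ge>0. (X has_vector_derivative (A0 ** X (\<theta> - \<sigma>) + X (\<theta> - \<sigma>) ** A1))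
            (at \<theta> within {0..}))
       \<and> (\<forall>\<theta>\<in>{-\<sigma>..0}. X \<theta> = \<Psi> \<theta>)"
  by (rule main[OF assms(1,3,4,5,6)])

end
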